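(* Let $m\ge 3$ items be placed independently, each uniformly at random into one of three boxes, and let $a,b,c$ be the random numbers of items in the three boxes. Then $\mathbb{E}[\min\{a,b,c\}]\ge \frac{2}{27}m$. *)

theory Defs
  imports "HOL-Probability.Probability"
begin

text \<open>An outcome of placing items 0..m-1 independently and uniformly into boxes 0,1,2
  is a function from items to boxes (extensional outside the items); the uniform
  distribution on all such functions is the product of independent uniform choices.\<close>

definition placements :: "nat \<Rightarrow> (nat \<Rightarrow> nat) set" where
  "placements m = PiE {..<m} (\<lambda>_. {0, 1, 2})"

definition box_count :: "nat \<Rightarrow> (nat \<Rightarrow> nat) \<Rightarrow> nat \<Rightarrow> nat" where
  "box_count m f j = card {i \<in> {..<m}. f i = j}"

end

theory Submission
  imports Defs
begin

definition PP :: "nat set \<Rightarrow> (nat \<Rightarrow> nat) set" where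
  "PP I = PiE I (\<lambda>_. {0, 1, 2})"

definition cnt :: "nat set \<Rightarrow> (nat \<Rightarrow> nat) \<Rightarrow> nat \<Rightarrow> nat" where
  "cnt I f j = card {i \<in> I. f i = j}"

definition mn :: "nat set \<Rightarrow> (nat \<Rightarrow> nat) \<Rightarrow> nat" where
  "mn I f = min (cnt I f 0) (min (cnt I f 1) (cnt I f 2))"

definition TT :: "nat set \<Rightarrow> real" where
  "TT I = (\<Sum>f\<in>PP I. real (mn I f))"

lemma finite_PP: "finite I \<Longrightarrow> finite (PP I)"
  unfolding PP_def by (simp add: finite_PiE)

lemma card_PP: "finite I \<Longrightarrow> card (PP I) = 3 ^ card I"
  unfolding PP_def by (simp add: card_PiE numeral_3_eq_3)

lemma cnt_Un:
  assumes "finite I" "finite J" "I \<inter> J = {}"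
  shows "cnt (I \<union> J) (\<lambda>i. if i \<in> I then g i else h i) j = cnt I g j + cnt J h j"
proof -
  have e: "{i \<in> I \<union> J. (if i \<in> I then g i else h i) = j} = {i \<in> I. g i = j} \<union> {i \<in> J. h i = j}"
    using assms(3) by auto
  show ?thesis unfolding cnt_def e
    by (rule card_Un_disjoint) (use assms in auto)
qed

lemma mn_Un:
  assumes "finite I" "finite J" "I \<inter> J = {}"
  shows "mn (I \<union> J) (\<lambda>i. if i \<in> I then g i else h i) \<ge> mn I g + mn J h"
  unfolding mn_def cnt_Un[OF assms] by linarith

lemma TT_Un:
  assumes "finite I" "finite J" "I \<inter> J = {}"
  shows "TT (I \<union> J) \<ge> TT I * 3 ^ card J + TT J * 3 ^ card I"
proof -
  let ?m = "\<lambda>(g, h). (\<lambda>i. if i \<in> I then g i else h i) :: nat \<Rightarrow> nat"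
  have bij: "bij_betw ?m (PP I \<times> PP J) (PP (I \<union> J))"
  proof (rule bij_betwI')
    fix x y assume "x \<in> PP I \<times> PP J" "y \<in> PP I \<times> PP J"
    then obtain g h g' h' where x: "x = (g, h)" and y: "y = (g', h')"
      and g: "g \<in> PP I" and h: "h \<in> PP J" and g': "g' \<in> PP I" and h': "h' \<in> PP J"
      by auto
    show "(?m x = ?m y) = (x = y)"
    proof
      assume eq: "?m x = ?m y"
      have "g = g'"
      proof
        fix i show "g i = g' i"
          using fun_cong[OF eq, of i] g g' unfolding x y PP_def
          by (cases "i \<in> I") (auto simp: PiE_def extensional_def)
      qed
      moreover have "h = h'"
      proof
        fix i show "h i = h' i"
          using fun_cong[OF eq, of i] h h' assms(3) unfolding x y PP_def
          by (cases "i \<in> I") (auto simp: PiE_def extensional_def disjoint_iff)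
      qed
      ultimately show "x = y" using x y by simp
    qed simp
  next
    fix x assume "x \<in> PP I \<times> PP J"
    then show "?m x \<in> PP (I \<union> J)"
      by (force simp: PP_def PiE_def extensional_def Pi_def)
  next
    fix f assume f: "f \<in> PP (I \<union> J)"
    show "\<exists>x\<in>PP I \<times> PP J. f = ?m x"
    proof (intro bexI)
      show "f = ?m (restrict f I, restrict f J)"
      proof
        fix i show "f i = ?m (restrict f I, restrict f J) i"
          using f by (auto simp: PP_def PiE_def extensional_def)
      qed
      show "(restrict f I, restrict f J) \<in> PP I \<times> PP J"
        using f by (auto simp: PP_def PiE_def Pi_def)
    qed
  qed
  have "TT (I \<union> J) = (\<Sum>x\<in>PP I \<times> PP J. real (mn (I \<union> J) (?m x)))"
    unfolding TT_def using sum.reindex_bij_betw[OF bij, of "\<lambda>f. real (mn (I \<union> J) f)"] by simp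
  also have "\<dots> \<ge> (\<Sum>x\<in>PP I \<times> PP J. real (mn I (fst x)) + real (mn J (snd x)))"
    by (rule sum_mono) (use mn_Un[OF assms] in \<open>auto simp: of_nat_add[symmetric] simp del: of_nat_add\<close>)
  also have "(\<Sum>x\<in>PP I \<times> PP J. real (mn I (fst x)) + real (mn J (snd x)))
      = (\<Sum>g\<in>PP I. \<Sum>h\<in>PP J. real (mn I g) + real (mn J h))"
    by (subst sum.cartesian_product) (simp add: split_def)
  also have "\<dots> = TT I * 3 ^ card J + TT J * 3 ^ card I"
    by (simp add: sum.distrib TT_def card_PP assms sum_distrib_left sum_distrib_right mult.commute)
  finally show ?thesis .
qed

lemma TT_base:
  assumes "finite I" "I \<noteq> {}"
  shows "TT I \<ge> 3 ^ card I - 3 * 2 ^ card I + 3"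
proof -
  define A where "A j = PiE I (\<lambda>_. {0,1,2::nat} - {j})" for j :: nat
  have fA: "finite (A j)" for j unfolding A_def using assms by (simp add: finite_PiE)
  have cA: "card (A j) = 2 ^ card I" if "j \<in> {0,1,2}" for j
  proof -
    have "card ({0,1,2::nat} - {j}) = 2" using that by auto
    then show ?thesis unfolding A_def using assms by (simp add: card_PiE)
  qed
  have A01: "A 0 \<inter> A 1 = PiE I (\<lambda>_. {2})" unfolding A_def PiE_Int
    by (rule PiE_cong) auto
  have A02: "A 0 \<inter> A 2 = PiE I (\<lambda>_. {1})" unfolding A_def PiE_Int
    by (rule PiE_cong) auto
  have A12: "A 1 \<inter> A 2 = PiE I (\<lambda>_. {0})" unfolding A_def PiE_Int
    by (rule PiE_cong) auto
  have c1: "card (PiE I (\<lambda>_. {k::nat})) = 1" for k using assms by (simp add: card_PiE)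
  have A012: "A 0 \<inter> A 1 \<inter> A 2 = {}"
  proof -
    have "A 0 \<inter> A 1 \<inter> A 2 = PiE I (\<lambda>_. {})" unfolding A_def PiE_Int
      by (rule PiE_cong) auto
    then show ?thesis using assms by (auto simp: PiE_eq_empty_iff)
  qed
  have u1: "card (A 0 \<union> A 1) = 2 * 2 ^ card I - 1"
    using card_Un_Int[OF fA fA, of 0 1] cA[of 0] cA[of 1] A01 c1 by simp
  have "(A 0 \<union> A 1) \<inter> A 2 = (A 0 \<inter> A 2) \<union> (A 1 \<inter> A 2)" by blast
  moreover have "card ((A 0 \<inter> A 2) \<union> (A 1 \<inter> A 2)) = 2"
  proof -
    have "(A 0 \<inter> A 2) \<inter> (A 1 \<inter> A 2) = {}" using A012 by blast
    then have "card ((A 0 \<inter> A 2) \<union> (A 1 \<inter> A 2)) = card (A 0 \<inter> A 2) + card (A 1 \<inter> A 2)"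
      by (intro card_Un_disjoint) (use fA in auto)
    also have "\<dots> = 2" unfolding A02 A12 c1 by simp
    finally show ?thesis .
  qed
  ultimately have i2: "card ((A 0 \<union> A 1) \<inter> A 2) = 2" by simp
  have u: "card (A 0 \<union> A 1 \<union> A 2) = 3 * 2 ^ card I - 3"
    using card_Un_Int[of "A 0 \<union> A 1" "A 2"] fA u1 i2 cA[of 2] by simp
  define S where "S = PP I - (A 0 \<union> A 1 \<union> A 2)"
  have sub: "A 0 \<union> A 1 \<union> A 2 \<subseteq> PP I" unfolding A_def PP_def by (auto simp: PiE_def Pi_def)
  have cS: "card S = 3 ^ card I - (3 * 2 ^ card I - 3)"
    unfolding S_def using card_Diff_subset[OF _ sub] fA card_PP[OF assms(1)] u by simp
  have ge: "3 * 2 ^ card I - 3 \<le> (3::nat) ^ card I"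
    using card_mono[OF finite_PP[OF assms(1)] sub] u card_PP[OF assms(1)] by simp
  have mnS: "mn I f \<ge> 1" if "f \<in> S" for f
  proof -
    have f: "f \<in> PP I" and nA: "\<And>j. j \<in> {0,1,2} \<Longrightarrow> f \<notin> A j" using that unfolding S_def by auto
    have "cnt I f j \<ge> 1" if j: "j \<in> {0,1,2}" for j
    proof -
      have "f \<notin> A j" using nA j .
      then obtain i where "i \<in> I" "f i = j"
        using f unfolding A_def PP_def by (auto simp: PiE_def Pi_def)
      then have "{i \<in> I. f i = j} \<noteq> {}" by auto
      then show ?thesis unfolding cnt_def using assms(1)
        by (simp add: Suc_le_eq card_gt_0_iff)
    qed
    then show ?thesis unfolding mn_def by simp
  qed
  have "real (card S) = (\<Sum>f\<in>S. 1)" by simp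
  also have "\<dots> \<le> (\<Sum>f\<in>S. real (mn I f))"
    by (rule sum_mono) (use mnS in auto)
  also have "\<dots> \<le> TT I" unfolding TT_def
    by (rule sum_mono2) (auto simp: S_def finite_PP assms)
  finally have "real (card S) \<le> TT I" .
  moreover have "real (card S) = 3 ^ card I - 3 * 2 ^ card I + 3"
    using cS ge by (simp add: of_nat_diff)
  ultimately show ?thesis by simp
qed

lemma TT_bound:
  "finite I \<Longrightarrow> card I \<ge> 3 \<Longrightarrow> TT I \<ge> 2 / 27 * card I * 3 ^ card I"
proof (induction "card I" arbitrary: I rule: less_induct)
  case less
  show ?case
  proof (cases "card I \<le> 5")
    case True
    have ne: "I \<noteq> {}" using less.prems by auto
    have "card I = 3 \<or> card I = 4 \<or> card I = 5" using True less.prems by auto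
    then show ?thesis using TT_base[OF less.prems(1) ne] by auto
  next
    case False
    obtain J where J: "J \<subseteq> I" "card J = 3" using obtain_subset_with_card_n[of 3 I] False by auto
    have fJ: "finite J" using J less.prems(1) finite_subset by blast
    let ?K = "I - J"
    have cK: "card ?K = card I - 3" using J less.prems(1) by (simp add: card_Diff_subset fJ)
    have fK: "finite ?K" using less.prems(1) by simp
    have IK: "I = ?K \<union> J" using J by auto
    have TK: "TT ?K \<ge> 2 / 27 * card ?K * 3 ^ card ?K"
      using less.hyps[of ?K] cK False fK by simp
    have TJ: "TT J \<ge> 6" using TT_base[OF fJ] J by (cases "J = {}") auto
    have "TT I \<ge> TT ?K * 3 ^ card J + TT J * 3 ^ card ?K"
      using TT_Un[OF fK fJ] IK by auto
    also have "TT ?K * 3 ^ card J + TT J * 3 ^ card ?K \<ge>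
        2 / 27 * card ?K * 3 ^ card ?K * 27 + 6 * 3 ^ card ?K"
      using TK TJ J(2) by (intro add_mono mult_right_mono) auto
    finally have *: "TT I \<ge> 2 / 27 * card ?K * 3 ^ card ?K * 27 + 6 * 3 ^ card ?K" .
    have ci: "card I = card ?K + 3" using cK False by simp
    have "2 / 27 * real (card I) * 3 ^ card I = 2 / 27 * card ?K * 3 ^ card ?K * 27 + 6 * 3 ^ card ?K"
      unfolding ci by (simp add: power_add algebra_simps)
    then show ?thesis using * by simp
  qed
qed

theorem lemma3:
  fixes m :: nat
  assumes "m \<ge> 3"
  shows "measure_pmf.expectation (pmf_of_set (placements m))
           (\<lambda>f. real (min (box_count m f 0) (min (box_count m f 1) (box_count m f 2))))
         \<ge> 2 / 27 * real m"
proof -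
  have pl: "placements m = PP {..<m}" unfolding placements_def PP_def by simp
  have ne: "PP {..<m} \<noteq> {}" unfolding PP_def by (simp add: PiE_eq_empty_iff)
  have "measure_pmf.expectation (pmf_of_set (placements m))
           (\<lambda>f. real (min (box_count m f 0) (min (box_count m f 1) (box_count m f 2))))
        = TT {..<m} / 3 ^ m"
    unfolding pl TT_def
    by (subst integral_pmf_of_set[OF ne finite_PP])
       (auto simp: card_PP mn_def cnt_def box_count_def)
  moreover have "TT {..<m} \<ge> 2 / 27 * m * 3 ^ m" using TT_bound[of "{..<m}"] assms by simp
  ultimately show ?thesis
  proof -
    assume a: "measure_pmf.expectation (pmf_of_set (placements m))
           (\<lambda>f. real (min (box_count m f 0) (min (box_count m f 1) (box_count m f 2)))) = TT {..<m} / 3 ^ m"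
      and b: "TT {..<m} \<ge> 2 / 27 * m * 3 ^ m"
    have "2 / 27 * real m = (2 / 27 * m * 3 ^ m) / 3 ^ m" by simp
    also have "\<dots> \<le> TT {..<m} / 3 ^ m" by (rule divide_right_mono[OF b]) simp
    finally show ?thesis using a by simp
  qed
qed

end
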